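(* In the setting below, the function $F=F(\theta,m,\bar a)$ is invariant under $W(m)=\{w\in W: w\circ m=m\}$: $F(wx)=F(x)$ for all $w\in W(m)$ and $x\in\check T\otimes\mathbb{C}$.
   Context: $\mathbb{T}$ is the circle group, $\mathbb{T}[n]$ its subgroup of order $n\ge1$. $G$ is a compact connected Lie group with maximal torus $T$, Weyl group $W$, $\check T=\mathrm{Hom}(\mathbb{T},T)$, $\hat T=\mathrm{Hom}(T,\mathbb{T})$; characters are extended $\mathbb{C}$-linearly to $\check T\otimes\mathbb{C}$ and $\mathbb{Z}[\hat T]$ is viewed as functions of $x\in\check T\otimes\mathbb{C}$ via $\chi\mapsto e^{\chi(x)}$. Let $\xi\in H^4(BG;\mathbb{Z})$ be positive definite, with quadratic form $\phi:\check T\to\mathbb{Z}$ ($\phi(m)$ = coefficient of $z^2$ in $(Bm)^*\xi$), $I(a,b)=\phi(a+b)-\phi(a)-\phi(b)$, $\hat I(a)(b)=I(a,b)$. Fix $\tau$ with $\mathrm{Im}\,\tau>0$, $q=e^{2\pi i\tau}$, $C=\mathbb{C}/(2\pi i\mathbb{Z}+2\pi i\tau\mathbb{Z})$. A theta function of level $\xi$ is $\theta\in\mathbb{Z}[\hat T]((q))$, holomorphic in $(x,\tau)$, with $\theta(x+2\pi i\tau m)=e^{-\hat I(m)(x)}q^{-\phi(m)}\theta(x)$ for $m\in\check T$ and $\theta(wx)=\theta(x)$ for $w\in W$. Let $m:\mathbb{T}[n]\to T$ be a homomorphism, $a\in C$ with $na=0$, $\bar a\in\mathbb{C}$ a lift,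 $\ell,k\in\mathbb{Z}$ with $n\bar a=2\pi i\ell+2\pi i\tau k$, and $\bar m\in\check T$ with $\bar m|_{\mathbb{T}[n]}=m$. Define $F(\theta,m,\bar a)(x)=\exp\big(\tfrac{k}{n}\hat I(\bar m)(x)+\tfrac{k}{n}\phi(\bar m)\bar a\big)\theta(x+\bar m\otimes\bar a)$ (independent of the choice of $\bar m$). *)

theory Defs
  imports "HOL-Analysis.Analysis"
begin

text \<open>The rank-r cocharacter lattice of T is int^'r
 (a basis is fixed), its complexification is complex^'r, characters are int^'r paired
 via the dual basis, and T itself is modelled as (unit) complex^'r, a cocharacter
 mbar acting by z -> (z^(mbar_i))_i.\<close>

definition pair :: "int^'r \<Rightarrow> complex^'r \<Rightarrow> complex" where
  "pair chi x = (\<Sum>i\<in>UNIV. of_int (chi$i) * x$i)"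

definition cvec :: "int^'r \<Rightarrow> complex^'r" where
  "cvec v = (\<chi> i. of_int (v$i))"

definition cmat :: "int^'r^'r \<Rightarrow> complex^'r^'r" where
  "cmat w = (\<chi> i j. of_int (w$i$j))"

definition wact :: "int^'r^'r \<Rightarrow> complex^'r \<Rightarrow> complex^'r" where
  "wact w x = cmat w *v x"

definition cochar :: "int^'r \<Rightarrow> complex \<Rightarrow> complex^'r" where
  "cochar v z = (\<chi> i. z powi (v$i))"

definition tact :: "int^'r^'r \<Rightarrow> complex^'r \<Rightarrow> complex^'r" where
  "tact w t = (\<chi> i. \<Prod>j\<in>UNIV. (t$j) powi (w$i$j))"

definition weyl_group :: "(int^'r^'r) set \<Rightarrow> bool" where
  "weyl_group W \<longleftrightarrow> finite W \<and> mat 1 \<in> W \<and> (\<forall>v\<in>W. \<forall>w\<in>W. v ** w \<in> W)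
     \<and> (\<forall>w\<in>W. \<exists>v\<in>W. v ** w = mat 1 \<and> w ** v = mat 1)"

definition stab :: "(int^'r^'r) set \<Rightarrow> nat \<Rightarrow> (complex \<Rightarrow> complex^'r) \<Rightarrow> (int^'r^'r) set" where
  "stab W n m = {w\<in>W. \<forall>z. z ^ n = 1 \<longrightarrow> tact w (m z) = m z}"

definition level_form :: "(int^'r^'r) set \<Rightarrow> (int^'r \<Rightarrow> int) \<Rightarrow> bool" where
  "level_form W \<phi> \<longleftrightarrow>
     (\<exists>c::int^'r^'r. \<forall>v. \<phi> v = (\<Sum>i\<in>UNIV. \<Sum>j\<in>UNIV. c$i$j * v$i * v$j))
     \<and> (\<forall>v. v \<noteq> 0 \<longrightarrow> \<phi> v > 0)
     \<and> (\<forall>w\<in>W. \<forall>v. \<phi> (w *v v) = \<phi> v)"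

definition Iform :: "(int^'r \<Rightarrow> int) \<Rightarrow> int^'r \<Rightarrow> int^'r \<Rightarrow> int" where
  "Iform \<phi> a b = \<phi> (a + b) - \<phi> a - \<phi> b"

definition Ihat :: "(int^'r \<Rightarrow> int) \<Rightarrow> int^'r \<Rightarrow> complex^'r \<Rightarrow> complex" where
  "Ihat \<phi> a x = (\<Sum>i\<in>UNIV. of_int (Iform \<phi> a (axis i 1)) * x$i)"

text \<open>Element of Z[That]((q)) given by integer coefficients c j chi (coefficient of
 q^j e^chi), evaluated at (tau, x).\<close>
definition theta_eval :: "(int \<Rightarrow> int^'r \<Rightarrow> int) \<Rightarrow> complex \<Rightarrow> complex^'r \<Rightarrow> complex" where
  "theta_eval c \<tau> x = (\<Sum>\<^sub>\<infinity>(j, chi)\<in>UNIV.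
      of_int (c j chi) * exp (pair chi x) * exp (2 * of_real pi * \<i> * \<tau> * of_int j))"

definition theta_terms :: "(int \<Rightarrow> int^'r \<Rightarrow> int) \<Rightarrow> complex \<Rightarrow> complex^'r \<Rightarrow> int \<times> (int^'r) \<Rightarrow> complex" where
  "theta_terms c \<tau> x = (\<lambda>(j, chi). of_int (c j chi) * exp (pair chi x) * exp (2 * of_real pi * \<i> * \<tau> * of_int j))"

text \<open>Theta function of level phi: a Laurent series in q (bounded below) with
 coefficients in Z[That] (finitely supported), converging and holomorphic in (x,tau)
 (stated as separate holomorphy in each variable, equivalent to joint holomorphy by
 Hartogs' theorem), quasi-periodic and W-invariant.\<close>
definition is_theta :: "(int^'r^'r) set \<Rightarrow> (int^'r \<Rightarrow> int) \<Rightarrow> (int \<Rightarrow> int^'r \<Rightarrow> int) \<Rightarrow> bool" where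
  "is_theta W \<phi> c \<longleftrightarrow>
     (\<exists>N. \<forall>j<N. \<forall>chi. c j chi = 0)
     \<and> (\<forall>j. finite {chi. c j chi \<noteq> 0})
     \<and> (\<forall>\<tau> x. Im \<tau> > 0 \<longrightarrow> theta_terms c \<tau> x summable_on UNIV)
     \<and> (\<forall>\<tau> x i. Im \<tau> > 0 \<longrightarrow>
          (\<lambda>z. theta_eval c \<tau> (\<chi> j. if j = i then z else x$j)) holomorphic_on UNIV)
     \<and> (\<forall>x. (\<lambda>\<tau>. theta_eval c \<tau> x) holomorphic_on {\<tau>. Im \<tau> > 0})
     \<and> (\<forall>\<tau> x v. Im \<tau> > 0 \<longrightarrow>
          theta_eval c \<tau> (x + (\<chi> i. 2 * of_real pi * \<i> * \<tau> * of_int (v$i)))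
          = exp (- Ihat \<phi> v x) * exp (- 2 * of_real pi * \<i> * \<tau> * of_int (\<phi> v)) * theta_eval c \<tau> x)
     \<and> (\<forall>\<tau> x. \<forall>w\<in>W. Im \<tau> > 0 \<longrightarrow> theta_eval c \<tau> (wact w x) = theta_eval c \<tau> x)"

definition Ffun :: "(int^'r \<Rightarrow> int) \<Rightarrow> (int \<Rightarrow> int^'r \<Rightarrow> int) \<Rightarrow> complex \<Rightarrow> nat \<Rightarrow> int
    \<Rightarrow> int^'r \<Rightarrow> complex \<Rightarrow> complex^'r \<Rightarrow> complex" where
  "Ffun \<phi> c \<tau> n k mbar abar x =
     exp (of_int k / of_nat n * Ihat \<phi> mbar x + of_int k / of_nat n * of_int (\<phi> mbar) * abar)
     * theta_eval c \<tau> (x + (\<chi> i. of_int (mbar$i) * abar))"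

end

theory Submission
  imports Defs
begin

definition qf :: "(int^'r \<Rightarrow> int) \<Rightarrow> int^'r^'r \<Rightarrow> bool" where
  "qf \<phi> C \<longleftrightarrow> (\<forall>v. \<phi> v = (\<Sum>i\<in>UNIV. \<Sum>j\<in>UNIV. C$i$j * v$i * v$j))"

lemma Iform_M:
  assumes "qf \<phi> C"
  shows "Iform \<phi> a b = (\<Sum>i\<in>UNIV. \<Sum>j\<in>UNIV. (C$i$j + C$j$i) * a$i * b$j)"
proof -
  have "Iform \<phi> a b = (\<Sum>i\<in>UNIV. \<Sum>j\<in>UNIV. C$i$j * a$i * b$j) + (\<Sum>i\<in>UNIV. \<Sum>j\<in>UNIV. C$i$j * b$i * a$j)"
    unfolding Iform_def assms[unfolded qf_def, rule_format] by (simp add: algebra_simps sum.distrib sum_subtractf[symmetric])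
  also have "(\<Sum>i\<in>UNIV. \<Sum>j\<in>UNIV. C$i$j * b$i * a$j) = (\<Sum>i\<in>UNIV. \<Sum>j\<in>UNIV. C$j$i * a$i * b$j)"
    by (subst sum.swap) (simp add: algebra_simps)
  finally show ?thesis by (simp add: algebra_simps sum.distrib)
qed

lemma phi_smult:
  assumes "qf \<phi> C"
  shows "\<phi> (t *s a) = t^2 * \<phi> a"
proof -
  have "(\<Sum>i\<in>UNIV. \<Sum>j\<in>UNIV. C$i$j * (t *s a)$i * (t *s a)$j) = (\<Sum>i\<in>UNIV. \<Sum>j\<in>UNIV. t^2 * (C$i$j * a$i * a$j))"
    by (intro sum.cong refl) (simp add: power2_eq_square algebra_simps)
  then show ?thesis unfolding assms[unfolded qf_def, rule_format] by (simp add: sum_distrib_left)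
qed

lemma I_self:
  assumes "qf \<phi> C"
  shows "Iform \<phi> a a = 2 * \<phi> a"
proof -
  have "a + a = 2 *s a" by (simp add: vec_eq_iff)
  then show ?thesis unfolding Iform_def using phi_smult[OF assms, of 2 a] by simp
qed

lemma I_sym: "Iform \<phi> a b = Iform \<phi> b a"
  unfolding Iform_def by (simp add: add.commute)

lemma I_add2:
  assumes "qf \<phi> C"
  shows "Iform \<phi> a (b + b') = Iform \<phi> a b + Iform \<phi> a b'"
  unfolding Iform_M[OF assms] by (simp add: algebra_simps sum.distrib)

lemma I_smult2:
  assumes "qf \<phi> C"
  shows "Iform \<phi> a (t *s b) = t * Iform \<phi> a b"
  unfolding Iform_M[OF assms] by (simp add: algebra_simps sum_distrib_left)

lemma I_add1:
  assumes "qf \<phi> C"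
  shows "Iform \<phi> (b + b') a = Iform \<phi> b a + Iform \<phi> b' a"
  using I_add2[OF assms] I_sym by metis

lemma I_smult1:
  assumes "qf \<phi> C"
  shows "Iform \<phi> (t *s b) a = t * Iform \<phi> b a"
  using I_smult2[OF assms] I_sym by metis

lemma I_axis_sum:
  assumes "qf \<phi> C"
  shows "Iform \<phi> a b = (\<Sum>k\<in>UNIV. Iform \<phi> a (axis k 1) * b$k)"
proof -
  have "(\<Sum>k\<in>UNIV. Iform \<phi> a (axis k 1) * b$k)
     = (\<Sum>k\<in>UNIV. (\<Sum>i\<in>UNIV. (C$i$k + C$k$i) * a$i) * b$k)"
    unfolding Iform_M[OF assms] by (simp add: axis_def if_distrib cong: if_cong)
  also have "\<dots> = (\<Sum>i\<in>UNIV. \<Sum>j\<in>UNIV. (C$i$j + C$j$i) * a$i * b$j)"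
    by (subst sum.swap) (simp add: sum_distrib_right)
  finally show ?thesis unfolding Iform_M[OF assms] by simp
qed

lemma Ihat_add_x: "Ihat \<phi> a (x + y) = Ihat \<phi> a x + Ihat \<phi> a y"
  by (simp add: Ihat_def algebra_simps sum.distrib)

lemma Ihat_scale_x: "Ihat \<phi> a (s *s x) = s * Ihat \<phi> a x"
  by (simp add: Ihat_def algebra_simps sum_distrib_left)

lemma Ihat_cvec:
  assumes "qf \<phi> C"
  shows "Ihat \<phi> a (cvec b) = of_int (Iform \<phi> a b)"
  by (simp add: Ihat_def cvec_def I_axis_sum[OF assms, of a b] of_int_sum)

lemma Ihat_add_a:
  assumes "qf \<phi> C"
  shows "Ihat \<phi> (a + b) x = Ihat \<phi> a x + Ihat \<phi> b x"
  by (simp add: Ihat_def I_add1[OF assms] algebra_simps sum.distrib)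

lemma Ihat_smult_a:
  assumes "qf \<phi> C"
  shows "Ihat \<phi> (t *s a) x = of_int t * Ihat \<phi> a x"
  by (simp add: Ihat_def I_smult1[OF assms] algebra_simps sum_distrib_left)

lemma I_W:
  assumes "level_form W \<phi>" "w \<in> W" "w' ** w = mat 1" "w ** w' = mat 1"
  shows "Iform \<phi> a (w *v b) = Iform \<phi> (w' *v a) b"
proof -
  have inv: "\<And>v. \<phi> (w *v v) = \<phi> v" using assms(1,2) unfolding level_form_def by blast
  have a: "a = w *v (w' *v a)" by (simp add: matrix_vector_mul_assoc assms(4))
  have "Iform \<phi> (w *v (w' *v a)) (w *v b) = Iform \<phi> (w' *v a) b"
    unfolding Iform_def matrix_vector_right_distrib[symmetric] inv ..
  then show ?thesis using a by simp
qed

lemma mv_axis: "(w *v axis j 1) $ k = (w $ k $ j :: int)"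
  by (simp add: matrix_vector_mult_def axis_def if_distrib cong: if_cong)

lemma Ihat_wact:
  assumes "qf \<phi> C" "level_form W \<phi>" "w \<in> W" "w' ** w = mat 1" "w ** w' = mat 1"
  shows "Ihat \<phi> a (wact w x) = Ihat \<phi> (w' *v a) x"
proof -
  have "Ihat \<phi> a (wact w x) = (\<Sum>k\<in>UNIV. of_int (Iform \<phi> a (axis k 1)) * (\<Sum>j\<in>UNIV. of_int (w$k$j) * x$j))"
    by (simp add: Ihat_def wact_def cmat_def matrix_vector_mult_def)
  also have "\<dots> = (\<Sum>j\<in>UNIV. of_int (\<Sum>k\<in>UNIV. Iform \<phi> a (axis k 1) * w$k$j) * x$j)"
    by (simp add: sum_distrib_left sum_distrib_right sum_distrib_left of_int_sum algebra_simps) (subst sum.swap, simp)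
  also have "\<dots> = (\<Sum>j\<in>UNIV. of_int (Iform \<phi> (w' *v a) (axis j 1)) * x$j)"
  proof (intro sum.cong refl)
    fix j
    have "(\<Sum>k\<in>UNIV. Iform \<phi> a (axis k 1) * w$k$j) = Iform \<phi> a (w *v axis j 1)"
      using I_axis_sum[OF assms(1), of a "w *v axis j 1"] by (simp add: mv_axis)
    also have "\<dots> = Iform \<phi> (w' *v a) (axis j 1)" using I_W[OF assms(2-5)] .
    finally show "of_int (\<Sum>k\<in>UNIV. Iform \<phi> a (axis k 1) * w$k$j) * x$j = of_int (Iform \<phi> (w' *v a) (axis j 1)) * x$j"
      by simp
  qed
  finally show ?thesis by (simp add: Ihat_def)
qed

lemma theta_per:
  "theta_eval c \<tau> (x + (\<chi> i. 2 * of_real pi * \<i> * of_int (p$i))) = theta_eval c \<tau> x"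
proof -
  have "exp (pair chi (x + (\<chi> i. 2 * of_real pi * \<i> * of_int (p$i)))) = exp (pair chi x)" for chi :: "int^'a"
  proof -
    have "pair chi (x + (\<chi> i. 2 * of_real pi * \<i> * of_int (p$i)))
       = pair chi x + \<i> * (of_int (\<Sum>i\<in>UNIV. chi$i * p$i) * (of_real pi * 2))"
      by (simp add: pair_def algebra_simps sum.distrib sum_distrib_left sum_distrib_right of_int_sum)
    then show ?thesis by (simp only: exp_plus_2pin)
  qed
  then show ?thesis unfolding theta_eval_def by simp
qed

lemma cmat_mult: "cmat (A ** B) = cmat A ** cmat B"
  by (simp add: vec_eq_iff cmat_def matrix_matrix_mult_def of_int_sum)

lemma cmat_one: "cmat (mat 1) = mat 1"
  by (simp add: vec_eq_iff cmat_def mat_def)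

lemma wact_wact: "w' ** w = mat 1 \<Longrightarrow> wact w' (wact w x) = x"
  by (simp add: wact_def matrix_vector_mul_assoc cmat_mult[symmetric] cmat_one)

lemma wact_add: "wact w (x + y) = wact w x + wact w y"
  by (simp add: wact_def matrix_vector_right_distrib)

lemma wact_shift: "wact w (\<chi> i. of_int (b$i) * s) = (\<chi> i. of_int ((w *v b)$i) * s)"
  by (simp add: vec_eq_iff wact_def cmat_def matrix_vector_mult_def sum_distrib_right sum_distrib_left of_int_sum algebra_simps)

lemma root_dvd:
  assumes "n \<ge> 1" "w \<in> stab W n m" "\<forall>z. z ^ n = 1 \<longrightarrow> m z = cochar mbar z"
  shows "int n dvd ((w *v mbar)$i - mbar$i)"
proof -
  define \<alpha> :: complex where "\<alpha> = 2 * of_real pi * \<i> / of_nat n"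
  define z where "z = exp \<alpha>"
  have "z ^ n = exp (of_nat n * \<alpha>)" unfolding z_def by (simp add: exp_of_nat_mult)
  also have "of_nat n * \<alpha> = 2 * of_real pi * \<i>" using assms(1) by (simp add: \<alpha>_def)
  finally have zn: "z ^ n = 1" by simp
  have "tact w (m z) = m z" using assms(2) zn unfolding stab_def by blast
  then have "tact w (cochar mbar z) = cochar mbar z" using assms(3) zn by simp
  then have "tact w (cochar mbar z) $ i = cochar mbar z $ i" by simp
  moreover have "tact w (cochar mbar z) $ i = exp (of_int ((w *v mbar)$i) * \<alpha>)"
    by (simp add: tact_def cochar_def z_def exp_power_int exp_sum[symmetric] matrix_vector_mult_def
        of_int_sum sum_distrib_right sum_distrib_left algebra_simps)
  moreover have "cochar mbar z $ i = exp (of_int (mbar$i) * \<alpha>)"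
    by (simp add: cochar_def z_def exp_power_int)
  ultimately obtain N :: int where N: "of_int ((w *v mbar)$i) * \<alpha> = of_int (mbar$i) * \<alpha> + of_int (2 * N) * pi * \<i>"
    using exp_eq by metis
  then have "of_int ((w *v mbar)$i - mbar$i) * (2 * of_real pi * \<i>) = of_int (int n * N) * (2 * of_real pi * \<i>)"
    using assms(1) by (simp add: \<alpha>_def field_simps)
  then have "of_int ((w *v mbar)$i - mbar$i) = (of_int (int n * N) :: complex)"
    by (simp add: pi_neq_zero)
  then have "(w *v mbar)$i - mbar$i = int n * N" using of_int_eq_iff by blast
  then show ?thesis by simp
qed

lemma mv_smult: "(w::int^'r^'r) *v (t *s v) = t *s (w *v v)"
  by (simp add: vec_eq_iff matrix_vector_mult_def sum_distrib_left algebra_simps)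

theorem lemma5p3:
  fixes W :: "(int^'r^'r) set" and \<phi> :: "int^'r \<Rightarrow> int" and c :: "int \<Rightarrow> int^'r \<Rightarrow> int"
    and \<tau> :: complex and n :: nat and m :: "complex \<Rightarrow> complex^'r" and mbar :: "int^'r"
    and abar :: complex and l k :: int
  assumes "weyl_group W" and "level_form W \<phi>" and "is_theta W \<phi> c"
    and "Im \<tau> > 0" and "n \<ge> 1"
    and "of_nat n * abar = 2 * of_real pi * \<i> * of_int l + 2 * of_real pi * \<i> * \<tau> * of_int k"
    and "\<forall>z. z ^ n = 1 \<longrightarrow> m z = cochar mbar z"
  shows "\<forall>w\<in>stab W n m. \<forall>x. Ffun \<phi> c \<tau> n k mbar abar (wact w x) = Ffun \<phi> c \<tau> n k mbar abar x"
proof (intro ballI allI)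
  fix w x assume w: "w \<in> stab W n m"
  have wW: "w \<in> W" using w unfolding stab_def by blast
  obtain w' where w': "w' \<in> W" "w' ** w = mat 1" "w ** w' = mat 1"
    using assms(1) wW unfolding weyl_group_def by blast
  obtain C where qf: "qf \<phi> C" using assms(2) unfolding level_form_def qf_def by blast
  have phiinv: "\<And>w v. w \<in> W \<Longrightarrow> \<phi> (w *v v) = \<phi> v" using assms(2) unfolding level_form_def by blast
  have thinv: "\<And>w y. w \<in> W \<Longrightarrow> theta_eval c \<tau> (wact w y) = theta_eval c \<tau> y"
    using assms(3,4) unfolding is_theta_def by blast
  have thq: "\<And>y v. theta_eval c \<tau> (y + (\<chi> i. 2 * of_real pi * \<i> * \<tau> * of_int (v$i)))
          = exp (- Ihat \<phi> v y) * exp (- 2 * of_real pi * \<i> * \<tau> * of_int (\<phi> v)) * theta_eval c \<tau> y"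
    using assms(3,4) unfolding is_theta_def by blast
  have n0: "n \<noteq> 0" using assms(5) by simp
  define v where "v = (\<chi> i. ((w *v mbar)$i - mbar$i) div int n)"
  have wm: "w *v mbar = mbar + int n *s v"
    using root_dvd[OF assms(5) w assms(7)] by (simp add: vec_eq_iff v_def)
  define u where "u = - (w' *v v)"
  have "mbar = w' *v (w *v mbar)" by (simp add: matrix_vector_mul_assoc w'(2))
  also have "\<dots> = w' *v mbar - int n *s u"
    by (simp add: wm matrix_vector_right_distrib mv_smult u_def)
  finally have w'm: "w' *v mbar = mbar + int n *s u" by (simp add: algebra_simps)
  have "\<phi> mbar = \<phi> (mbar + int n *s u)" using phiinv[OF w'(1), of mbar] w'm by simp
  also have "\<dots> = \<phi> mbar + int n ^ 2 * \<phi> u + int n * Iform \<phi> mbar u"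
    using phi_smult[OF qf, of "int n" u] I_smult2[OF qf, of mbar "int n" u]
    unfolding Iform_def by simp
  finally have "int n * (int n * \<phi> u + Iform \<phi> mbar u) = 0" by (simp add: power2_eq_square algebra_simps)
  then have Ium: "Iform \<phi> u mbar = - int n * \<phi> u" using n0 I_sym[of \<phi> u mbar] by simp
  define y0 where "y0 = x + (\<chi> i. of_int (mbar$i) * abar)"
  define p where "p = l *s u"
  define v2 where "v2 = k *s u"
  define Y where "Y = y0 + (\<chi> i. 2 * of_real pi * \<i> * of_int (p$i))"
  have "theta_eval c \<tau> (wact w x + (\<chi> i. of_int (mbar$i) * abar))
      = theta_eval c \<tau> (wact w' (wact w x + (\<chi> i. of_int (mbar$i) * abar)))"
    using thinv[OF w'(1)] by simp
  also have "\<dots> = theta_eval c \<tau> (x + (\<chi> i. of_int ((w' *v mbar)$i) * abar))"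
    by (simp add: wact_add wact_wact[OF w'(2)] wact_shift)
  also have "x + (\<chi> i. of_int ((w' *v mbar)$i) * abar) = Y + (\<chi> i. 2 * of_real pi * \<i> * \<tau> * of_int (v2$i))"
  proof -
    have "of_int ((w' *v mbar)$i) * abar = of_int (mbar$i) * abar + of_int (u$i) * (of_nat n * abar)" for i
      by (simp add: w'm algebra_simps)
    then show ?thesis unfolding assms(6)
      by (simp add: vec_eq_iff Y_def y0_def p_def v2_def algebra_simps)
  qed
  also have "theta_eval c \<tau> (Y + (\<chi> i. 2 * of_real pi * \<i> * \<tau> * of_int (v2$i)))
     = exp (- Ihat \<phi> v2 Y) * exp (- 2 * of_real pi * \<i> * \<tau> * of_int (\<phi> v2)) * theta_eval c \<tau> y0"
    unfolding thq Y_def theta_per ..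
  finally have T: "theta_eval c \<tau> (wact w x + (\<chi> i. of_int (mbar$i) * abar)) =
      exp (- Ihat \<phi> v2 Y) * exp (- 2 * of_real pi * \<i> * \<tau> * of_int (\<phi> v2)) * theta_eval c \<tau> y0" .
  have E1: "Ihat \<phi> mbar (wact w x) = Ihat \<phi> mbar x + of_nat n * Ihat \<phi> u x"
    by (simp add: Ihat_wact[OF qf assms(2) wW w'(2,3)] w'm Ihat_add_a[OF qf] Ihat_smult_a[OF qf])
  have Yeq: "Y = x + abar *s cvec mbar + (2 * of_real pi * \<i>) *s cvec p"
    by (simp add: vec_eq_iff Y_def y0_def cvec_def algebra_simps)
  have E2: "Ihat \<phi> v2 Y = of_int k * (Ihat \<phi> u x + abar * of_int (Iform \<phi> u mbar)
       + 2 * of_real pi * \<i> * of_int l * of_int (Iform \<phi> u u))"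
    unfolding Yeq v2_def p_def
    by (simp add: Ihat_smult_a[OF qf] Ihat_add_x Ihat_scale_x Ihat_cvec[OF qf] I_smult2[OF qf] I_smult1[OF qf] algebra_simps)
  have E3: "\<phi> v2 = k^2 * \<phi> u" unfolding v2_def by (rule phi_smult[OF qf])
  have Iuu: "Iform \<phi> u u = 2 * \<phi> u" by (rule I_self[OF qf])
  have ab: "abar = (2 * of_real pi * \<i> * of_int l + 2 * of_real pi * \<i> * \<tau> * of_int k) / of_nat n"
    using assms(6) n0 by (simp add: field_simps)
  define E0 where "E0 = of_int k / of_nat n * Ihat \<phi> mbar x + of_int k / of_nat n * of_int (\<phi> mbar) * abar"
  have expo: "(of_int k / of_nat n * Ihat \<phi> mbar (wact w x) + of_int k / of_nat n * of_int (\<phi> mbar) * abar)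
     + (- Ihat \<phi> v2 Y) + (- 2 * of_real pi * \<i> * \<tau> * of_int (\<phi> v2))
     = E0 + \<i> * (of_int (- k * l * \<phi> u) * (of_real pi * 2))"
    unfolding E0_def E1 E2 E3 Ium Iuu ab using n0 by (simp add: field_simps power2_eq_square)
  have "Ffun \<phi> c \<tau> n k mbar abar (wact w x)
     = exp ((of_int k / of_nat n * Ihat \<phi> mbar (wact w x) + of_int k / of_nat n * of_int (\<phi> mbar) * abar)
     + (- Ihat \<phi> v2 Y) + (- 2 * of_real pi * \<i> * \<tau> * of_int (\<phi> v2))) * theta_eval c \<tau> y0"
    unfolding Ffun_def T exp_add by (simp add: mult.assoc)
  also have "\<dots> = Ffun \<phi> c \<tau> n k mbar abar x"
    unfolding expo exp_plus_2pin by (simp add: Ffun_def E0_def y0_def)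
  finally show "Ffun \<phi> c \<tau> n k mbar abar (wact w x) = Ffun \<phi> c \<tau> n k mbar abar x" .
qed

end
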